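(* Let $\ell$ be a log-scale on a set $X$, and let $(x_n)$ and $(y_n)$ be Cauchy sequences with respect to $\ell$ that are not equivalent. Then there exists a constant $\Delta>0$ such that any two partial limits of the sequence $\ell(x_n,y_n)$ differ from each other by at most $\Delta$.
   Context: A log-scale on a set $X$ is a function $\ell:X\times X\to\mathbb{R}\cup\{\infty\}$ such that $\ell(x,y)=\ell(y,x)$, $\ell(x,y)=+\infty$ iff $x=y$, and for some $\delta\ge0$, $\ell(x,z)\ge\min(\ell(x,y),\ell(y,z))-\delta$ for all $x,y,z$. A sequence $(x_n)$ is Cauchy (with respect to $\ell$) if $\ell(x_n,x_m)\to\infty$ as $n,m\to\infty$. Two Cauchy sequences $(x_n),(y_n)$ are equivalent if $\ell(x_n,y_n)\to\infty$. *)

theory Defs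
  imports "HOL-Analysis.Analysis"
begin

definition log_scale :: "'a set \<Rightarrow> ('a \<Rightarrow> 'a \<Rightarrow> ereal) \<Rightarrow> bool" where
  "log_scale X l \<longleftrightarrow>
     (\<forall>x\<in>X. \<forall>y\<in>X. l x y \<noteq> -\<infinity>) \<and>
     (\<forall>x\<in>X. \<forall>y\<in>X. l x y = l y x) \<and>
     (\<forall>x\<in>X. \<forall>y\<in>X. l x y = \<infinity> \<longleftrightarrow> x = y) \<and>
     (\<exists>\<delta>::real. \<delta> \<ge> 0 \<and>
        (\<forall>x\<in>X. \<forall>y\<in>X. \<forall>z\<in>X. l x z \<ge> min (l x y) (l y z) - ereal \<delta>))"

definition ls_cauchy :: "('a \<Rightarrow> 'a \<Rightarrow> ereal) \<Rightarrow> (nat \<Rightarrow> 'a) \<Rightarrow> bool" where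
  "ls_cauchy l x \<longleftrightarrow> (\<forall>M::real. \<exists>N. \<forall>n\<ge>N. \<forall>m\<ge>N. l (x n) (x m) \<ge> ereal M)"

definition ls_equivalent :: "('a \<Rightarrow> 'a \<Rightarrow> ereal) \<Rightarrow> (nat \<Rightarrow> 'a) \<Rightarrow> (nat \<Rightarrow> 'a) \<Rightarrow> bool" where
  "ls_equivalent l x y \<longleftrightarrow> ((\<lambda>n. l (x n) (y n)) \<longlongrightarrow> \<infinity>) sequentially"

definition partial_limit :: "(nat \<Rightarrow> ereal) \<Rightarrow> ereal \<Rightarrow> bool" where
  "partial_limit s a \<longleftrightarrow> (\<exists>r. strict_mono r \<and> ((s \<circ> r) \<longlongrightarrow> a) sequentially)"

end

theory Submission
  imports Defs
begin

lemma ereal_sub_helper: "ereal t \<le> u \<Longrightarrow> ereal (t - d) \<le> u - ereal d"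
  by (cases u) auto

theorem proposition1p1p9:
  fixes X :: "'a set" and l :: "'a \<Rightarrow> 'a \<Rightarrow> ereal" and x y :: "nat \<Rightarrow> 'a"
  assumes "log_scale X l"
    and "\<And>n. x n \<in> X" and "\<And>n. y n \<in> X"
    and "ls_cauchy l x" and "ls_cauchy l y"
    and "\<not> ls_equivalent l x y"
  shows "\<exists>\<Delta>::real. \<Delta> > 0 \<and>
           (\<forall>a b. partial_limit (\<lambda>n. l (x n) (y n)) a \<longrightarrow>
                  partial_limit (\<lambda>n. l (x n) (y n)) b \<longrightarrow>
                  a \<le> b + ereal \<Delta> \<and> b \<le> a + ereal \<Delta>)"
proof -
  define s where "s = (\<lambda>n. l (x n) (y n))"
  obtain \<delta> :: real where d0: "\<delta> \<ge> 0" and tri0: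
    "\<forall>u\<in>X. \<forall>v\<in>X. \<forall>w\<in>X. l u w \<ge> min (l u v) (l v w) - ereal \<delta>"
    using assms(1) unfolding log_scale_def by (elim conjE exE) (rule that)
  have tri: "l u w \<ge> min (l u v) (l v w) - ereal \<delta>" if "u \<in> X" "v \<in> X" "w \<in> X" for u v w
    using tri0 that by blast
  have nmi0: "\<forall>u\<in>X. \<forall>v\<in>X. l u v \<noteq> -\<infinity>"
    using assms(1) unfolding log_scale_def by (elim conjE)
  have nmi: "l u v \<noteq> -\<infinity>" if "u \<in> X" "v \<in> X" for u v
    using nmi0 that by blast
  from assms(6) have "\<not> (s \<longlonglongrightarrow> \<infinity>)" unfolding ls_equivalent_def s_def by simp
  then obtain B where B: "\<not> eventually (\<lambda>n. s n > ereal B) sequentially"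
    unfolding tendsto_PInfty by blast
  hence freq: "\<And>N. \<exists>m\<ge>N. s m \<le> ereal B"
    unfolding eventually_sequentially by (auto simp: not_less)
  define M where "M = B + 4*\<delta> + 1"
  obtain N1 where N1: "\<And>n m. n \<ge> N1 \<Longrightarrow> m \<ge> N1 \<Longrightarrow> l (x n) (x m) \<ge> ereal M"
    using assms(4) unfolding ls_cauchy_def by blast
  obtain N2 where N2: "\<And>n m. n \<ge> N2 \<Longrightarrow> m \<ge> N2 \<Longrightarrow> l (y n) (y m) \<ge> ereal M"
    using assms(5) unfolding ls_cauchy_def by blast
  define N where "N = max N1 N2"
  obtain m where m: "m \<ge> N" "s m \<le> ereal B" using freq by blast
  have "s m \<noteq> -\<infinity>" using nmi assms(2,3) unfolding s_def by blast
  moreover have "s m \<noteq> \<infinity>" using m by auto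
  ultimately obtain r where r: "s m = ereal r" by (cases "s m") auto
  have rB: "r \<le> B" using m r by simp
  have low: "ereal (r - 2*\<delta>) \<le> s n" if "n \<ge> N" for n
  proof -
    have a1: "l (y m) (y n) \<ge> ereal M" using N2 m that unfolding N_def by auto
    have "min (l (x m) (y m)) (l (y m) (y n)) \<ge> ereal r"
      proof (rule min.boundedI)
      show "ereal r \<le> l (x m) (y m)" using r unfolding s_def by simp
      have "ereal r \<le> ereal M" using rB d0 unfolding M_def by simp
      thus "ereal r \<le> l (y m) (y n)" using a1 by (rule order_trans)
    qed
    hence "ereal (r - \<delta>) \<le> min (l (x m) (y m)) (l (y m) (y n)) - ereal \<delta>"
      by (rule ereal_sub_helper)
    also have "\<dots> \<le> l (x m) (y n)" using tri assms(2,3) by blast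
    finally have b1: "ereal (r - \<delta>) \<le> l (x m) (y n)" .
    have a2: "l (x n) (x m) \<ge> ereal M" using N1 m that unfolding N_def by auto
    have "min (l (x n) (x m)) (l (x m) (y n)) \<ge> ereal (r - \<delta>)"
      proof (rule min.boundedI)
      have "ereal (r - \<delta>) \<le> ereal M" using rB d0 unfolding M_def by simp
      thus "ereal (r - \<delta>) \<le> l (x n) (x m)" using a2 by (rule order_trans)
    qed (rule b1)
    hence "ereal (r - \<delta> - \<delta>) \<le> min (l (x n) (x m)) (l (x m) (y n)) - ereal \<delta>"
      by (rule ereal_sub_helper)
    also have "\<dots> \<le> l (x n) (y n)" using tri assms(2,3) by blast
    finally show ?thesis unfolding s_def by (simp add: algebra_simps)
  qed
  have up: "s n \<le> ereal (r + 2*\<delta> + 1)" if "n \<ge> N" for n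
  proof (rule ccontr)
    assume "\<not> ?thesis"
    hence sn: "s n \<ge> ereal (r + 2*\<delta> + 1)" by simp
    have a1: "l (y n) (y m) \<ge> ereal M" using N2 m that unfolding N_def by auto
    have "min (l (x n) (y n)) (l (y n) (y m)) \<ge> ereal (r + 2*\<delta> + 1)"
      proof (rule min.boundedI)
      show "ereal (r + 2*\<delta> + 1) \<le> l (x n) (y n)" using sn unfolding s_def by simp
      have "ereal (r + 2*\<delta> + 1) \<le> ereal M" using rB d0 unfolding M_def by simp
      thus "ereal (r + 2*\<delta> + 1) \<le> l (y n) (y m)" using a1 by (rule order_trans)
    qed
    hence "ereal (r + 2*\<delta> + 1 - \<delta>) \<le> min (l (x n) (y n)) (l (y n) (y m)) - ereal \<delta>"
      by (rule ereal_sub_helper)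
    also have "\<dots> \<le> l (x n) (y m)" using tri assms(2,3) by blast
    finally have b1: "ereal (r + 2*\<delta> + 1 - \<delta>) \<le> l (x n) (y m)" .
    have a2: "l (x m) (x n) \<ge> ereal M" using N1 m that unfolding N_def by auto
    have "min (l (x m) (x n)) (l (x n) (y m)) \<ge> ereal (r + 2*\<delta> + 1 - \<delta>)"
      proof (rule min.boundedI)
      have "ereal (r + 2*\<delta> + 1 - \<delta>) \<le> ereal M" using rB d0 unfolding M_def by simp
      thus "ereal (r + 2*\<delta> + 1 - \<delta>) \<le> l (x m) (x n)" using a2 by (rule order_trans)
    qed (rule b1)
    hence "ereal (r + 2*\<delta> + 1 - \<delta> - \<delta>) \<le> min (l (x m) (x n)) (l (x n) (y m)) - ereal \<delta>"
      by (rule ereal_sub_helper)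
    also have "\<dots> \<le> l (x m) (y m)" using tri assms(2,3) by blast
    finally have "ereal (r + 1) \<le> s m" unfolding s_def by (simp add: algebra_simps)
    thus False using r by simp
  qed
  have bnd: "ereal (r - 2*\<delta>) \<le> a \<and> a \<le> ereal (r + 2*\<delta> + 1)" if pl: "partial_limit s a" for a
  proof -
    obtain \<rho> where \<rho>: "strict_mono \<rho>" "(s \<circ> \<rho>) \<longlonglongrightarrow> a"
      using pl unfolding partial_limit_def by blast
    have ev: "eventually (\<lambda>k. \<rho> k \<ge> N) sequentially"
      unfolding eventually_sequentially using seq_suble[OF \<rho>(1)] le_trans by blast
    have "eventually (\<lambda>k. ereal (r - 2*\<delta>) \<le> (s \<circ> \<rho>) k) sequentially"
      using ev by eventually_elim (simp add: low)
    hence 1: "ereal (r - 2*\<delta>) \<le> a"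
      using tendsto_lowerbound[OF \<rho>(2)] by simp
    have "eventually (\<lambda>k. (s \<circ> \<rho>) k \<le> ereal (r + 2*\<delta> + 1)) sequentially"
      using ev by eventually_elim (simp add: up)
    hence 2: "a \<le> ereal (r + 2*\<delta> + 1)"
      using tendsto_upperbound[OF \<rho>(2)] by simp
    show ?thesis using 1 2 by simp
  qed
  have key: "a \<le> b + ereal (4*\<delta> + 2)" if "partial_limit s a" "partial_limit s b" for a b
  proof -
    have "a \<le> ereal (r + 2*\<delta> + 1)" using bnd[OF that(1)] by simp
    also have "\<dots> \<le> ereal (r - 2*\<delta>) + ereal (4*\<delta> + 2)" by simp
    also have "\<dots> \<le> b + ereal (4*\<delta> + 2)"
      using bnd[OF that(2)] by (intro add_right_mono) simp
    finally show ?thesis .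
  qed
  show ?thesis
  proof (intro exI[of _ "4*\<delta> + 2"] conjI allI impI)
    show "0 < 4*\<delta> + 2" using d0 by simp
    fix a b assume "partial_limit (\<lambda>n. l (x n) (y n)) a" "partial_limit (\<lambda>n. l (x n) (y n)) b"
    hence "partial_limit s a" "partial_limit s b" unfolding s_def by simp_all
    thus "a \<le> b + ereal (4*\<delta> + 2)" "b \<le> a + ereal (4*\<delta> + 2)" using key by blast+
  qed
qed

end
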